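(* Let $S$ be a nonempty set and $G$ a group of permutations of $S$, and suppose that $G$ and $SV_G$ are both finitely generated, equipped with word metrics from finite generating sets. Then there exists a coarse Lipschitz map $\rho\colon SV_G\to G$ such that $\rho\circ\iota_\varnothing$ is the identity of $G$. In particular, $G$ is a quasi-retract of $SV_G$, and $\iota_\varnothing$ is a quasi-isometric embedding of $G$ into $SV_G$.
   Context: Let $\mathfrak C=\{0,1\}^{\omega}$ be the Cantor set, $S$ a nonempty set, and $G$ a subgroup of the symmetric group of $S$. Let $\mathfrak C^S$ be the space of all functions $S\to\mathfrak C$ with the product topology. For a function $\psi\colon S\to\{0,1\}^*$ with $\psi(s)=\varnothing$ for all but finitely many $s$, the dyadic brick $B(\psi)$ is the set of $\kappa\in\mathfrak C^S$ such that $\psi(s)$ is a prefix of $\kappa(s)$ for all $s\in S$; the canonical homeomorphism $\Phi_\psi\colon\mathfrak C^S\to B(\psi)$ is $\Phi_\psi(\kappa)(s)=\psi(s)\cdot\kappa(s)$. For $\gamma\in G$ let $\tau_\gamma\colon\mathfrak C^S\to\mathfrak C^S$ be $\tau_\gamma(\kappa)(s)=\kappa(\gamma^{-1}s)$. The twist homeomorphism $B(\varphi)\to B(\psi)$ associated to $\gamma$ is $\Phi_\psi\circ\tau_\gamma\circ\Phi_\varphi^{-1}$. The twisted Brin–Thompson group $SV_G$ is the group of all homeomorphisms $h$ of $\mathfrak C^S$ for which there exist two partitions $B(\varphi_1),\dots,B(\varphi_n)$ and $B(\psi_1),\dots,B(\psi_n)$ of $\mathfrak C^S$ into dyadic bricks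 and $\gamma_1,\dots,\gamma_n\in G$ such that $h|_{B(\varphi_i)}$ is the twist homeomorphism $B(\varphi_i)\to B(\psi_i)$ associated to $\gamma_i$. The embedding $\iota_\varnothing\colon G\to SV_G$ is $\iota_\varnothing(\gamma)=\tau_\gamma$. A map $f\colon X\to Y$ of metric spaces is coarse Lipschitz if $d(f(x),f(x'))\le C\,d(x,x')+D$ for some constants $C,D>0$ and all $x,x'$. It is a quasi-isometric embedding if moreover $d(f(x),f(x'))\ge \frac1C d(x,x')-D$. $Y$ is a quasi-retract of $X$ if there exist coarse Lipschitz maps $\rho\colon X\to Y$ and $\iota\colon Y\to X$ and $E>0$ with $d(\rho(\iota(y)),y)\le E$ for all $y\in Y$. *)

theory Defs
  imports "HOL-Analysis.Analysis"
begin

text \<open>The Cantor set is modelled as infinite binary sequences nat => bool,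
  the space C^S as functions 'a => (nat => bool), where the type 'a plays the role of S
  (types are nonempty).\<close>

type_synonym cantor = "nat \<Rightarrow> bool"
type_synonym 'a cube = "'a \<Rightarrow> cantor"

definition cantor_top :: "cantor topology" where
  "cantor_top = product_topology (\<lambda>_. discrete_topology (UNIV::bool set)) UNIV"

definition cube_top :: "'a cube topology" where
  "cube_top = product_topology (\<lambda>_. cantor_top) UNIV"

definition is_prefix :: "bool list \<Rightarrow> cantor \<Rightarrow> bool" where
  "is_prefix w x \<longleftrightarrow> (\<forall>i<length w. x i = w ! i)"

definition fin_supp :: "('a \<Rightarrow> bool list) \<Rightarrow> bool" where
  "fin_supp \<psi> \<longleftrightarrow> finite {s. \<psi> s \<noteq> []}"

definition brick :: "('a \<Rightarrow> bool list) \<Rightarrow> 'a cube set" where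
  "brick \<psi> = {\<kappa>. \<forall>s. is_prefix (\<psi> s) (\<kappa> s)}"

definition concat_seq :: "bool list \<Rightarrow> cantor \<Rightarrow> cantor" where
  "concat_seq w x = (\<lambda>i. if i < length w then w ! i else x (i - length w))"

definition Phi :: "('a \<Rightarrow> bool list) \<Rightarrow> 'a cube \<Rightarrow> 'a cube" where
  "Phi \<psi> \<kappa> = (\<lambda>s. concat_seq (\<psi> s) (\<kappa> s))"

definition tau :: "('a \<Rightarrow> 'a) \<Rightarrow> 'a cube \<Rightarrow> 'a cube" where
  "tau \<gamma> \<kappa> = (\<lambda>s. \<kappa> (inv \<gamma> s))"

text \<open>Twist homeomorphism B(phi) -> B(psi) associated to gamma:
  Phi_psi o tau_gamma o Phi_phi^{-1} (considered on B(phi)).\<close>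
definition twist :: "('a \<Rightarrow> bool list) \<Rightarrow> ('a \<Rightarrow> bool list) \<Rightarrow> ('a \<Rightarrow> 'a) \<Rightarrow> 'a cube \<Rightarrow> 'a cube" where
  "twist \<phi> \<psi> \<gamma> = Phi \<psi> \<circ> tau \<gamma> \<circ> inv_into UNIV (Phi \<phi>)"

definition brick_partition :: "('a \<Rightarrow> bool list) list \<Rightarrow> bool" where
  "brick_partition ps \<longleftrightarrow>
     (\<forall>\<psi>\<in>set ps. fin_supp \<psi>) \<and>
     (\<forall>i<length ps. \<forall>j<length ps. i \<noteq> j \<longrightarrow> brick (ps ! i) \<inter> brick (ps ! j) = {}) \<and>
     (\<Union>\<psi>\<in>set ps. brick \<psi>) = UNIV"

definition perm_group :: "('a \<Rightarrow> 'a) set \<Rightarrow> bool" where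
  "perm_group G \<longleftrightarrow> (\<forall>g\<in>G. bij g) \<and> id \<in> G \<and>
     (\<forall>g\<in>G. \<forall>h\<in>G. g \<circ> h \<in> G) \<and> (\<forall>g\<in>G. inv g \<in> G)"

definition SV :: "('a \<Rightarrow> 'a) set \<Rightarrow> ('a cube \<Rightarrow> 'a cube) set" where
  "SV G = {h. homeomorphic_map cube_top cube_top h \<and>
     (\<exists>phis psis gs. length psis = length phis \<and> length gs = length phis \<and>
        brick_partition phis \<and> brick_partition psis \<and> set gs \<subseteq> G \<and>
        (\<forall>i<length phis. \<forall>\<kappa>\<in>brick (phis ! i). h \<kappa> = twist (phis ! i) (psis ! i) (gs ! i) \<kappa>))}"

definition word_prods :: "('b \<Rightarrow> 'b) set \<Rightarrow> ('b \<Rightarrow> 'b) set" where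
  "word_prods A = {foldr (\<circ>) xs id | xs. set xs \<subseteq> A \<union> inv ` A}"

definition generates :: "('b \<Rightarrow> 'b) set \<Rightarrow> ('b \<Rightarrow> 'b) set \<Rightarrow> bool" where
  "generates A X \<longleftrightarrow> A \<subseteq> X \<and> X = word_prods A"

definition word_length :: "('b \<Rightarrow> 'b) set \<Rightarrow> ('b \<Rightarrow> 'b) \<Rightarrow> nat" where
  "word_length A g = (LEAST n. \<exists>xs. length xs = n \<and> set xs \<subseteq> A \<union> inv ` A \<and> foldr (\<circ>) xs id = g)"

definition word_dist :: "('b \<Rightarrow> 'b) set \<Rightarrow> ('b \<Rightarrow> 'b) \<Rightarrow> ('b \<Rightarrow> 'b) \<Rightarrow> real" where
  "word_dist A g h = real (word_length A (inv g \<circ> h))"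

definition coarse_lipschitz ::
  "'x set \<Rightarrow> ('x \<Rightarrow> 'x \<Rightarrow> real) \<Rightarrow> ('y \<Rightarrow> 'y \<Rightarrow> real) \<Rightarrow> ('x \<Rightarrow> 'y) \<Rightarrow> bool" where
  "coarse_lipschitz X dX dY f \<longleftrightarrow> (\<exists>C D. C > 0 \<and> D > 0 \<and>
     (\<forall>x\<in>X. \<forall>x'\<in>X. dY (f x) (f x') \<le> C * dX x x' + D))"

definition qi_embedding ::
  "'x set \<Rightarrow> ('x \<Rightarrow> 'x \<Rightarrow> real) \<Rightarrow> ('y \<Rightarrow> 'y \<Rightarrow> real) \<Rightarrow> ('x \<Rightarrow> 'y) \<Rightarrow> bool" where
  "qi_embedding X dX dY f \<longleftrightarrow> (\<exists>C D. C > 0 \<and> D > 0 \<and>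
     (\<forall>x\<in>X. \<forall>x'\<in>X. dY (f x) (f x') \<le> C * dX x x' + D \<and>
                     dY (f x) (f x') \<ge> dX x x' / C - D))"

definition quasi_retract ::
  "'y set \<Rightarrow> ('y \<Rightarrow> 'y \<Rightarrow> real) \<Rightarrow> 'x set \<Rightarrow> ('x \<Rightarrow> 'x \<Rightarrow> real) \<Rightarrow> bool" where
  "quasi_retract Y dY X dX \<longleftrightarrow> (\<exists>\<rho> \<iota> E. \<rho> ` X \<subseteq> Y \<and> \<iota> ` Y \<subseteq> X \<and>
     coarse_lipschitz X dX dY \<rho> \<and> coarse_lipschitz Y dY dX \<iota> \<and> E > 0 \<and>
     (\<forall>y\<in>Y. dY (\<rho> (\<iota> y)) y \<le> E))"

end

theory Submission
  imports Defs
begin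


lemma topspace_cube [simp]: "topspace cube_top = UNIV"
  by (simp add: cube_top_def cantor_top_def)

lemma tau_comp:
  assumes "bij g" "bij h"
  shows "tau (g \<circ> h) = tau g \<circ> tau h"
  using assms by (auto simp: tau_def o_inv_distrib fun_eq_iff)

lemma tau_id [simp]: "tau id = id"
  by (auto simp: tau_def fun_eq_iff inv_id)

lemma tau_inv:
  assumes "bij g"
  shows "inv (tau g) = tau (inv g)"
proof -
  have b: "bij (inv g)" using assms by (simp add: bij_imp_bij_inv)
  have 1: "tau (inv g) \<circ> tau g = id" using tau_comp[OF b assms] assms
    by (simp add: bij_is_inj inv_o_cancel)
  have gi: "g \<circ> inv g = id" by (meson assms bij_is_surj surj_iff)
  have 2: "tau g \<circ> tau (inv g) = id" using tau_comp[OF assms b] gi by simp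
  show ?thesis using 1 2 by (metis inv_unique_comp)
qed

lemma tau_homeo:
  assumes "bij g"
  shows "homeomorphic_map cube_top cube_top (tau g)"
proof -
  have c: "continuous_map cube_top cube_top (tau h)" for h :: "'a \<Rightarrow> 'a"
    unfolding cube_top_def continuous_map_componentwise_UNIV tau_def
    by (auto intro: continuous_map_product_projection)
  have b: "bij (inv g)" using assms by (simp add: bij_imp_bij_inv)
  have 1: "tau (inv g) \<circ> tau g = id" using tau_comp[OF b assms] assms
    by (simp add: bij_is_inj inv_o_cancel)
  have gi: "g \<circ> inv g = id" by (meson assms bij_is_surj surj_iff)
  have 2: "tau g \<circ> tau (inv g) = id" using tau_comp[OF assms b] gi by simp
  have "homeomorphic_maps cube_top cube_top (tau g) (tau (inv g))"
    unfolding homeomorphic_maps_def using c 1 2 by (auto simp: fun_eq_iff o_def)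
  then show ?thesis by (rule homeomorphic_maps_imp_map)
qed

lemma Phi_inj: "inj (Phi \<phi>)"
proof (rule injI)
  fix a b assume e: "Phi \<phi> a = Phi \<phi> b"
  show "a = b"
  proof (rule ext, rule ext)
    fix s i
    have "Phi \<phi> a s (i + length (\<phi> s)) = Phi \<phi> b s (i + length (\<phi> s))" using e by simp
    then show "a s i = b s i" by (simp add: Phi_def concat_seq_def)
  qed
qed

lemma Phi_inv:
  assumes "\<kappa> \<in> brick \<phi>"
  shows "inv_into UNIV (Phi \<phi>) \<kappa> = (\<lambda>s i. \<kappa> s (i + length (\<phi> s)))"
proof -
  have "Phi \<phi> (\<lambda>s i. \<kappa> s (i + length (\<phi> s))) = \<kappa>"
  proof (rule ext, rule ext)
    fix s i
    have pre: "\<And>i. i < length (\<phi> s) \<Longrightarrow> \<kappa> s i = \<phi> s ! i"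
      using assms unfolding brick_def is_prefix_def by blast
    show "Phi \<phi> (\<lambda>s i. \<kappa> s (i + length (\<phi> s))) s i = \<kappa> s i"
    proof (cases "i < length (\<phi> s)")
      case True then show ?thesis using pre[OF True] by (simp add: Phi_def concat_seq_def)
    next
      case False then show ?thesis by (simp add: Phi_def concat_seq_def)
    qed
  qed
  then have "inv_into UNIV (Phi \<phi>) \<kappa> = inv_into UNIV (Phi \<phi>) (Phi \<phi> (\<lambda>s i. \<kappa> s (i + length (\<phi> s))))"
    by simp
  also have "\<dots> = (\<lambda>s i. \<kappa> s (i + length (\<phi> s)))"
    by (rule inv_into_f_f[OF Phi_inj UNIV_I])
  finally show ?thesis .
qed

lemma twist_formula:
  assumes "\<kappa> \<in> brick \<phi>"
  shows "twist \<phi> \<psi> \<gamma> \<kappa> t = concat_seq (\<psi> t) (\<lambda>i. \<kappa> (inv \<gamma> t) (i + length (\<phi> (inv \<gamma> t))))"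
  using assms by (simp add: twist_def Phi_inv Phi_def tau_def)

definition TGerm :: "('a cube \<Rightarrow> 'a cube) \<Rightarrow> 'a cube \<Rightarrow> ('a \<Rightarrow> 'a) \<Rightarrow> bool" where
  "TGerm h \<kappa> \<gamma> \<longleftrightarrow> (\<exists>\<phi> \<psi>. \<kappa> \<in> brick \<phi> \<and> (\<forall>\<kappa>'\<in>brick \<phi>. h \<kappa>' = twist \<phi> \<psi> \<gamma> \<kappa>'))"

definition dep :: "('a cube \<Rightarrow> 'a cube) \<Rightarrow> 'a cube set \<Rightarrow> ('a \<Rightarrow> 'a) \<Rightarrow> bool" where
  "dep h U \<gamma> \<longleftrightarrow> (\<forall>\<kappa>1\<in>U. \<forall>\<kappa>2\<in>U. \<forall>t. \<kappa>1 (inv \<gamma> t) = \<kappa>2 (inv \<gamma> t) \<longrightarrow> h \<kappa>1 t = h \<kappa>2 t)"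

definition Germ :: "('a cube \<Rightarrow> 'a cube) \<Rightarrow> 'a cube \<Rightarrow> ('a \<Rightarrow> 'a) \<Rightarrow> bool" where
  "Germ h \<kappa> \<gamma> \<longleftrightarrow> (\<exists>\<phi>. \<kappa> \<in> brick \<phi> \<and> dep h (brick \<phi>) \<gamma>)"

lemma tw_dep:
  assumes "\<forall>\<kappa>'\<in>brick \<phi>. h \<kappa>' = twist \<phi> \<psi> \<gamma> \<kappa>'"
  shows "dep h (brick \<phi>) \<gamma>"
  unfolding dep_def
proof (intro ballI allI impI)
  fix k1 k2 t assume k1: "k1 \<in> brick \<phi>" and k2: "k2 \<in> brick \<phi>" and e: "k1 (inv \<gamma> t) = k2 (inv \<gamma> t)"
  have "h k1 t = twist \<phi> \<psi> \<gamma> k1 t" using assms k1 by simp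
  also have "\<dots> = twist \<phi> \<psi> \<gamma> k2 t"
    unfolding twist_formula[OF k1] twist_formula[OF k2] e ..
  also have "\<dots> = h k2 t" using assms k2 by simp
  finally show "h k1 t = h k2 t" .
qed

lemma TGerm_Germ: "TGerm h \<kappa> \<gamma> \<Longrightarrow> Germ h \<kappa> \<gamma>"
  unfolding TGerm_def Germ_def using tw_dep by blast

lemma Germ_unique:
  assumes T: "TGerm h \<kappa> \<gamma>0" and Gm: "Germ h \<kappa> \<gamma>" and b: "bij \<gamma>" "bij \<gamma>0"
  shows "\<gamma> = \<gamma>0"
proof (rule ccontr)
  assume ne: "\<gamma> \<noteq> \<gamma>0"
  have "inv \<gamma> \<noteq> inv \<gamma>0" using ne b by (metis inv_inv_eq)
  then obtain t where tn: "inv \<gamma> t \<noteq> inv \<gamma>0 t" by auto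
  obtain \<phi>0 \<psi>0 where k0: "\<kappa> \<in> brick \<phi>0" and tw: "\<forall>\<kappa>'\<in>brick \<phi>0. h \<kappa>' = twist \<phi>0 \<psi>0 \<gamma>0 \<kappa>'"
    using T unfolding TGerm_def by blast
  obtain \<phi> where k1: "\<kappa> \<in> brick \<phi>" and d: "dep h (brick \<phi>) \<gamma>"
    using Gm unfolding Germ_def by blast
  define u0 where "u0 = inv \<gamma>0 t"
  define N where "N = length (\<phi>0 u0) + length (\<phi> u0)"
  define \<kappa>2 where "\<kappa>2 = \<kappa>(u0 := (\<kappa> u0)(N := \<not> \<kappa> u0 N))"
  have in0: "\<kappa>2 \<in> brick \<phi>0" using k0 unfolding \<kappa>2_def brick_def is_prefix_def N_def by auto
  have in1: "\<kappa>2 \<in> brick \<phi>" using k1 unfolding \<kappa>2_def brick_def is_prefix_def N_def by auto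
  have "\<kappa> (inv \<gamma> t) = \<kappa>2 (inv \<gamma> t)" using tn unfolding \<kappa>2_def u0_def by simp
  then have eq: "h \<kappa> t = h \<kappa>2 t" using d k1 in1 unfolding dep_def by blast
  define j where "j = length (\<psi>0 t) + length (\<phi> u0)"
  have "h \<kappa> t j = \<kappa> u0 N"
    using tw k0 twist_formula[OF k0, of \<psi>0 \<gamma>0 t]
    unfolding j_def N_def u0_def by (simp add: concat_seq_def add.commute)
  moreover have "h \<kappa>2 t j = (\<not> \<kappa> u0 N)"
    using tw in0 twist_formula[OF in0, of \<psi>0 \<gamma>0 t]
    unfolding j_def N_def u0_def \<kappa>2_def by (simp add: concat_seq_def add.commute)
  ultimately show False using eq by simp
qed



lemma Germ_comp:
  assumes Gh: "Germ h p \<gamma>1" and Tc: "TGerm c x \<beta>" and cx: "c x = p"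
    and b: "bij \<beta>" "bij \<gamma>1"
  shows "Germ (h \<circ> c) x (\<gamma>1 \<circ> \<beta>)"
proof -
  obtain \<phi>1 where p1: "p \<in> brick \<phi>1" and d1: "dep h (brick \<phi>1) \<gamma>1"
    using Gh unfolding Germ_def by blast
  obtain \<phi>2 \<psi>2 where x2: "x \<in> brick \<phi>2" and tw: "\<forall>\<kappa>'\<in>brick \<phi>2. c \<kappa>' = twist \<phi>2 \<psi>2 \<beta> \<kappa>'"
    using Tc unfolding TGerm_def by blast
  have d2: "dep c (brick \<phi>2) \<beta>"
    using tw by (rule tw_dep)
  define \<phi>3 where "\<phi>3 u = map (x u) [0..< length (\<phi>2 u) + length (\<phi>1 (\<beta> u))]" for u
  have x3: "x \<in> brick \<phi>3" unfolding brick_def is_prefix_def \<phi>3_def by simp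
  have sub: "brick \<phi>3 \<subseteq> brick \<phi>2"
  proof
    fix k assume k: "k \<in> brick \<phi>3"
    show "k \<in> brick \<phi>2" unfolding brick_def is_prefix_def mem_Collect_eq
    proof (intro allI impI)
      fix s i assume i: "i < length (\<phi>2 s)"
      have "k s i = x s i" using k i unfolding brick_def is_prefix_def \<phi>3_def by auto
      also have "\<dots> = \<phi>2 s ! i" using x2 i unfolding brick_def is_prefix_def by auto
      finally show "k s i = \<phi>2 s ! i" .
    qed
  qed
  have img: "c k \<in> brick \<phi>1" if k: "k \<in> brick \<phi>3" for k
    unfolding brick_def is_prefix_def mem_Collect_eq
  proof (intro allI impI)
    fix t i assume i: "i < length (\<phi>1 t)"
    define u where "u = inv \<beta> t"
    have bu: "\<beta> u = t" unfolding u_def using b by (meson bij_inv_eq_iff)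
    have k2: "k \<in> brick \<phi>2" using k sub by auto
    have ck: "c k t = concat_seq (\<psi>2 t) (\<lambda>i. k u (i + length (\<phi>2 u)))"
      using tw k2 twist_formula[OF k2, of \<psi>2 \<beta> t] unfolding u_def by metis
    have cxt: "c x t = concat_seq (\<psi>2 t) (\<lambda>i. x u (i + length (\<phi>2 u)))"
      using tw x2 twist_formula[OF x2, of \<psi>2 \<beta> t] unfolding u_def by metis
    have "c k t i = c x t i"
    proof (cases "i < length (\<psi>2 t)")
      case True
      then show ?thesis unfolding ck cxt concat_seq_def by simp
    next
      case False
      have lt: "i - length (\<psi>2 t) + length (\<phi>2 u) < length (\<phi>2 u) + length (\<phi>1 (\<beta> u))"
        using i bu False by simp
      have "k u (i - length (\<psi>2 t) + length (\<phi>2 u)) = x u (i - length (\<psi>2 t) + length (\<phi>2 u))"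
      proof -
        define j where "j = i - length (\<psi>2 t) + length (\<phi>2 u)"
        have jl: "j < length (\<phi>3 u)" using lt unfolding j_def \<phi>3_def by simp
        have "k u j = \<phi>3 u ! j" using k jl unfolding brick_def is_prefix_def by blast
        also have "\<phi>3 u ! j = x u j" using jl unfolding \<phi>3_def by simp
        finally show ?thesis unfolding j_def .
      qed
      then show ?thesis using False unfolding ck cxt concat_seq_def by simp
    qed
    also have "\<dots> = \<phi>1 t ! i" using p1 cx i unfolding brick_def is_prefix_def by auto
    finally show "c k t i = \<phi>1 t ! i" .
  qed
  have "dep (h \<circ> c) (brick \<phi>3) (\<gamma>1 \<circ> \<beta>)"
    unfolding dep_def
  proof (intro ballI allI impI)
    fix k1 k2 t assume k1: "k1 \<in> brick \<phi>3" and k2: "k2 \<in> brick \<phi>3"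
      and e: "k1 (inv (\<gamma>1 \<circ> \<beta>) t) = k2 (inv (\<gamma>1 \<circ> \<beta>) t)"
    have e': "k1 (inv \<beta> (inv \<gamma>1 t)) = k2 (inv \<beta> (inv \<gamma>1 t))"
      using e b by (simp add: o_inv_distrib)
    have "c k1 (inv \<gamma>1 t) = c k2 (inv \<gamma>1 t)"
      using d2 sub k1 k2 e' unfolding dep_def by blast
    then have "h (c k1) t = h (c k2) t"
      using d1 img[OF k1] img[OF k2] unfolding dep_def by blast
    then show "(h \<circ> c) k1 t = (h \<circ> c) k2 t" by simp
  qed
  then show ?thesis unfolding Germ_def using x3 by blast
qed



lemma foldr_comp_gen: "foldr (\<circ>) xs f = foldr (\<circ>) xs id \<circ> f"
  by (induction xs) (auto simp: fun_eq_iff)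

lemma foldr_comp_append: "foldr (\<circ>) (xs @ ys) id = foldr (\<circ>) xs id \<circ> foldr (\<circ>) ys id"
  by (induction xs) auto

lemma foldr_bij: "\<forall>x\<in>set xs. bij x \<Longrightarrow> bij (foldr (\<circ>) xs id)"
  by (induction xs) (auto intro: bij_comp)

lemma foldr_inv: "\<forall>x\<in>set xs. bij x \<Longrightarrow> inv (foldr (\<circ>) xs id) = foldr (\<circ>) (rev (map inv xs)) id"
proof (induction xs)
  case Nil then show ?case by (simp add: inv_id)
next
  case (Cons x xs)
  have bx: "bij x" and br: "bij (foldr (\<circ>) xs id)" using Cons.prems foldr_bij by auto
  have ih: "inv (foldr (\<circ>) xs id) = foldr (\<circ>) (rev (map inv xs)) id"
    by (rule Cons.IH) (use Cons.prems in auto)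
  have "inv (foldr (\<circ>) (x # xs) id) = inv (foldr (\<circ>) xs id) \<circ> inv x"
    using bx br by (simp add: o_inv_distrib)
  also have "\<dots> = foldr (\<circ>) (rev (map inv xs)) id \<circ> inv x"
    by (simp only: ih)
  also have "\<dots> = foldr (\<circ>) (rev (map inv (x # xs))) id"
    by (simp del: foldr_append add: foldr_comp_append)
  finally show ?case .
qed

lemma gen_bij:
  assumes "\<forall>a\<in>A. bij a" "g \<in> word_prods A"
  shows "bij g"
proof -
  obtain xs where "set xs \<subseteq> A \<union> inv ` A" "foldr (\<circ>) xs id = g" using assms(2) unfolding word_prods_def by blast
  moreover have "\<forall>x\<in>set xs. bij x" using calculation(1) assms(1) by (auto simp: bij_imp_bij_inv)
  ultimately show ?thesis using foldr_bij by blast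
qed

lemma gen_comp:
  assumes "g \<in> word_prods A" "h \<in> word_prods A"
  shows "g \<circ> h \<in> word_prods A"
proof -
  obtain xs where x: "set xs \<subseteq> A \<union> inv ` A" "foldr (\<circ>) xs id = g" using assms(1) unfolding word_prods_def by blast
  obtain ys where y: "set ys \<subseteq> A \<union> inv ` A" "foldr (\<circ>) ys id = h" using assms(2) unfolding word_prods_def by blast
  show ?thesis unfolding word_prods_def using x y foldr_comp_append[of xs ys]
    by (intro CollectI exI[of _ "xs @ ys"]) auto
qed

lemma gen_inv:
  assumes "\<forall>a\<in>A. bij a" "g \<in> word_prods A"
  shows "inv g \<in> word_prods A"
proof -
  obtain xs where x: "set xs \<subseteq> A \<union> inv ` A" "foldr (\<circ>) xs id = g" using assms(2) unfolding word_prods_def by blast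
  have bx: "\<forall>x\<in>set xs. bij x" using x(1) assms(1) by (auto simp: bij_imp_bij_inv)
  have "set (rev (map inv xs)) \<subseteq> A \<union> inv ` A"
  proof
    fix y assume "y \<in> set (rev (map inv xs))"
    then obtain z where z: "z \<in> set xs" "y = inv z" by auto
    show "y \<in> A \<union> inv ` A"
    proof (cases "z \<in> A")
      case True then show ?thesis using z by auto
    next
      case False
      then obtain a where "a \<in> A" "z = inv a" using z x(1) by auto
      then show ?thesis using z assms(1) by (simp add: inv_inv_eq)
    qed
  qed
  then show ?thesis unfolding word_prods_def using foldr_inv[OF bx] x(2) by blast
qed

lemma wl_word:
  assumes "g \<in> word_prods A"
  shows "\<exists>xs. length xs = word_length A g \<and> set xs \<subseteq> A \<union> inv ` A \<and> foldr (\<circ>) xs id = g"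
proof -
  have "\<exists>n xs. length xs = n \<and> set xs \<subseteq> A \<union> inv ` A \<and> foldr (\<circ>) xs id = g"
    using assms unfolding word_prods_def by blast
  then show ?thesis unfolding word_length_def by (rule LeastI_ex)
qed

lemma wl_le:
  assumes "set xs \<subseteq> A \<union> inv ` A" "foldr (\<circ>) xs id = g"
  shows "word_length A g \<le> length xs"
  unfolding word_length_def using assms by (intro Least_le) blast

lemma wl_id: "word_length A id = 0"
  using wl_le[of "[]" A id] by simp

lemma wl_sub:
  assumes "g \<in> word_prods A" "h \<in> word_prods A"
  shows "word_length A (g \<circ> h) \<le> word_length A g + word_length A h"
proof -
  obtain xs where x: "length xs = word_length A g" "set xs \<subseteq> A \<union> inv ` A" "foldr (\<circ>) xs id = g"
    using wl_word[OF assms(1)] by blast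
  obtain ys where y: "length ys = word_length A h" "set ys \<subseteq> A \<union> inv ` A" "foldr (\<circ>) ys id = h"
    using wl_word[OF assms(2)] by blast
  have "word_length A (g \<circ> h) \<le> length (xs @ ys)"
    using x y by (intro wl_le) (auto simp del: foldr_append simp: foldr_comp_append)
  then show ?thesis using x y by simp
qed

lemma finite_bound:
  fixes Q :: "'c \<Rightarrow> nat \<Rightarrow> bool"
  assumes "finite I" "\<forall>c\<in>I. \<exists>K. Q c K" "\<And>c K K'. Q c K \<Longrightarrow> K \<le> K' \<Longrightarrow> Q c K'"
  shows "\<exists>K. \<forall>c\<in>I. Q c K"
  using assms(1,2)
proof (induction I rule: finite_induct)
  case empty then show ?case by simp
next
  case (insert x F)
  then obtain K1 where K1: "\<forall>c\<in>F. Q c K1" by auto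
  obtain K2 where K2: "Q x K2" using insert.prems by auto
  have "\<forall>c\<in>insert x F. Q c (max K1 K2)" using K1 K2 assms(3) by (metis insert_iff max.cobounded1 max.cobounded2)
  then show ?case by blast
qed



lemma pg_bij: "perm_group G \<Longrightarrow> g \<in> G \<Longrightarrow> bij g"
  by (simp add: perm_group_def)
lemma pg_comp: "perm_group G \<Longrightarrow> g \<in> G \<Longrightarrow> h \<in> G \<Longrightarrow> g \<circ> h \<in> G"
  by (simp add: perm_group_def)
lemma pg_inv: "perm_group G \<Longrightarrow> g \<in> G \<Longrightarrow> inv g \<in> G"
  by (simp add: perm_group_def)
lemma pg_id: "perm_group G \<Longrightarrow> id \<in> G"
  by (simp add: perm_group_def)

lemma SV_bij: "h \<in> SV G \<Longrightarrow> bij h"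
proof -
  assume "h \<in> SV G"
  then have hm: "homeomorphic_map cube_top cube_top h" unfolding SV_def mem_Collect_eq by (rule conjunct1)
  have "inj_on h UNIV" using homeomorphic_imp_injective_map[OF hm] by simp
  moreover have "h ` UNIV = UNIV" using homeomorphic_imp_surjective_map[OF hm] by simp
  ultimately show "bij h" by (simp add: bij_def)
qed

lemma SV_germs:
  assumes "h \<in> SV G"
  shows "\<exists>F. finite F \<and> F \<subseteq> G \<and> (\<forall>\<kappa>. \<exists>\<gamma>\<in>F. TGerm h \<kappa> \<gamma>)"
proof -
  obtain phis psis gs where l: "length psis = length phis" "length gs = length phis"
    and bp: "brick_partition phis" and gsG: "set gs \<subseteq> G"
    and tw: "\<forall>i<length phis. \<forall>\<kappa>\<in>brick (phis ! i). h \<kappa> = twist (phis ! i) (psis ! i) (gs ! i) \<kappa>"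
  proof -
    have "\<exists>phis psis gs. length psis = length phis \<and> length gs = length phis \<and>
        brick_partition phis \<and> brick_partition psis \<and> set gs \<subseteq> G \<and>
        (\<forall>i<length phis. \<forall>\<kappa>\<in>brick (phis ! i). h \<kappa> = twist (phis ! i) (psis ! i) (gs ! i) \<kappa>)"
      using assms unfolding SV_def mem_Collect_eq by (rule conjunct2)
    then show ?thesis using that by (elim exE conjE) 
  qed
  have cov: "(\<Union>\<psi>\<in>set phis. brick \<psi>) = UNIV" using bp by (simp add: brick_partition_def)
  have ex: "\<exists>\<gamma>\<in>set gs. TGerm h \<kappa> \<gamma>" for \<kappa>
  proof -
    have "\<kappa> \<in> (\<Union>\<psi>\<in>set phis. brick \<psi>)" using cov by simp
    then obtain \<psi> where "\<psi> \<in> set phis" "\<kappa> \<in> brick \<psi>" by (rule UN_E)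
    then obtain i where i: "i < length phis" "phis ! i = \<psi>" by (meson in_set_conv_nth)
    have twi: "\<And>\<kappa>'. \<kappa>' \<in> brick (phis ! i) \<Longrightarrow> h \<kappa>' = twist (phis ! i) (psis ! i) (gs ! i) \<kappa>'"
      using tw i(1) by simp
    have "TGerm h \<kappa> (gs ! i)" unfolding TGerm_def
      using twi i(2) \<open>\<kappa> \<in> brick \<psi>\<close> by (intro exI[of _ "phis ! i"] exI[of _ "psis ! i"] conjI ballI) auto
    moreover have "gs ! i \<in> set gs" using i l by simp
    ultimately show ?thesis by (rule bexI)
  qed
  have "finite (set gs)" by simp
  then show ?thesis using gsG ex by (intro exI[of _ "set gs"] conjI) simp_all
qed

lemma brick_empty [simp]: "brick (\<lambda>_. []) = UNIV"
  by (simp add: brick_def is_prefix_def)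

lemma twist_empty: "twist (\<lambda>_. []) (\<lambda>_. []) \<gamma> = tau \<gamma>"
proof (rule ext, rule ext)
  fix \<kappa> :: "'a cube" and t
  have "\<kappa> \<in> brick (\<lambda>_. [])" by simp
  from twist_formula[OF this] show "twist (\<lambda>_. []) (\<lambda>_. []) \<gamma> \<kappa> t = tau \<gamma> \<kappa> t"
    by (simp add: concat_seq_def tau_def)
qed

lemma TGerm_tau: "TGerm (tau \<gamma>) \<kappa> \<gamma>"
  unfolding TGerm_def by (intro exI[of _ "\<lambda>_. []"]) (simp add: twist_empty)

lemma tau_SV:
  assumes "perm_group G" "\<gamma> \<in> G"
  shows "tau \<gamma> \<in> SV G"
proof -
  have b: "bij \<gamma>" using assms by (rule pg_bij)
  have bp: "brick_partition [\<lambda>_::'a. []]"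
    unfolding brick_partition_def fin_supp_def by simp
  show ?thesis unfolding SV_def
    using tau_homeo[OF b] bp assms(2)
    by (intro CollectI conjI exI[of _ "[\<lambda>_. []]"] exI[of _ "[\<gamma>]"]) (auto simp: twist_empty)
qed

definition rho :: "('a \<Rightarrow> 'a) set \<Rightarrow> ('a cube \<Rightarrow> 'a cube) \<Rightarrow> ('a \<Rightarrow> 'a)" where
  "rho G h = (SOME \<gamma>. \<gamma> \<in> G \<and> TGerm h (inv h undefined) \<gamma>)"

lemma rho_prop:
  assumes "h \<in> SV G"
  shows "rho G h \<in> G \<and> TGerm h (inv h undefined) (rho G h)"
proof -
  obtain F where "F \<subseteq> G" "\<forall>\<kappa>. \<exists>\<gamma>\<in>F. TGerm h \<kappa> \<gamma>" using SV_germs[OF assms] by blast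
  then have "\<exists>\<gamma>. \<gamma> \<in> G \<and> TGerm h (inv h undefined) \<gamma>" by blast
  then show ?thesis unfolding rho_def by (rule someI_ex)
qed

lemma rho_tau:
  assumes "perm_group G" "\<gamma> \<in> G"
  shows "rho G (tau \<gamma>) = \<gamma>"
proof -
  have s: "tau \<gamma> \<in> SV G" by (rule tau_SV[OF assms])
  have "TGerm (tau \<gamma>) (inv (tau \<gamma>) undefined) (rho G (tau \<gamma>))" "rho G (tau \<gamma>) \<in> G"
    using rho_prop[OF s] by auto
  moreover have "Germ (tau \<gamma>) (inv (tau \<gamma>) undefined) \<gamma>" by (rule TGerm_Germ[OF TGerm_tau])
  ultimately show ?thesis using assms pg_bij by (metis Germ_unique)
qed

lemma rho_step:
  assumes pg: "perm_group G" and gen: "generates B (SV G)" and c: "c \<in> SV G"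
  shows "\<exists>F. finite F \<and> F \<subseteq> G \<and> (\<forall>h\<in>SV G. \<exists>\<beta>\<in>F. rho G (h \<circ> c) = rho G h \<circ> \<beta>)"
proof -
  obtain F where F: "finite F" "F \<subseteq> G" "\<forall>\<kappa>. \<exists>\<gamma>\<in>F. TGerm c \<kappa> \<gamma>" using SV_germs[OF c] by blast
  have bijG: "\<And>g. g \<in> G \<Longrightarrow> bij g" using pg by (rule pg_bij)
  have SVe: "SV G = word_prods B" using gen unfolding generates_def by blast
  have "\<exists>\<beta>\<in>F. rho G (h \<circ> c) = rho G h \<circ> \<beta>" if h: "h \<in> SV G" for h
  proof -
    define p where "p = inv h undefined"
    define x where "x = inv c p"
    have bc: "bij c" using SV_bij[OF c] .
    have bh: "bij h" using SV_bij[OF h] .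
    have cx: "c x = p" unfolding x_def using bc by (simp add: bij_is_surj surj_f_inv_f)
    obtain \<beta> where \<beta>: "\<beta> \<in> F" "TGerm c x \<beta>" using F(3) by blast
    have r1: "rho G h \<in> G" "TGerm h p (rho G h)" using rho_prop[OF h] unfolding p_def by auto
    have hc: "h \<circ> c \<in> SV G" using gen_comp[of h B c] h c SVe by simp
    have r2: "rho G (h \<circ> c) \<in> G" "TGerm (h \<circ> c) x (rho G (h \<circ> c))"
      using rho_prop[OF hc] bc bh unfolding x_def p_def by (auto simp: o_inv_distrib)
    have "Germ (h \<circ> c) x (rho G h \<circ> \<beta>)"
      using Germ_comp[OF TGerm_Germ[OF r1(2)] \<beta>(2) cx] bijG r1(1) \<beta>(1) F(2) by blast
    moreover have "bij (rho G h \<circ> \<beta>)" using bijG r1(1) \<beta>(1) F(2) by (blast intro: bij_comp)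
    ultimately have "rho G h \<circ> \<beta> = rho G (h \<circ> c)"
      using Germ_unique[OF r2(2)] bijG[OF r2(1)] by blast
    then show ?thesis using \<beta>(1) by metis
  qed
  then show ?thesis using F by blast
qed



lemma wl_id': "word_length A (\<lambda>a. a) = 0" using wl_id[of A] unfolding id_def .
lemma tau_id': "tau (\<lambda>a. a) = id" using tau_id unfolding id_def .

lemma rho_chain:
  assumes pg: "perm_group G" and genA: "generates A G" and gen: "generates B (SV G)"
    and K: "\<forall>c\<in>I. \<forall>h\<in>SV G. \<exists>\<beta>\<in>G. rho G (h \<circ> c) = rho G h \<circ> \<beta> \<and> word_length A \<beta> \<le> K"
    and I: "I \<subseteq> SV G"
  shows "set xs \<subseteq> I \<Longrightarrow> h \<in> SV G \<Longrightarrow>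
     \<exists>w\<in>G. rho G (h \<circ> foldr (\<circ>) xs id) = rho G h \<circ> w \<and> word_length A w \<le> K * length xs"
proof (induction xs arbitrary: h)
  case Nil
  then show ?case using pg_id[OF pg] wl_id[of A] wl_id'[of A] by (intro bexI[of _ id]) auto
next
  case (Cons x xs)
  have SVe: "SV G = word_prods B" using gen unfolding generates_def by blast
  have Ge: "G = word_prods A" using genA unfolding generates_def by blast
  have xI: "x \<in> I" using Cons.prems by simp
  have xsI: "set xs \<subseteq> I" using Cons.prems by simp
  have hx: "h \<circ> x \<in> SV G" using gen_comp[of h B x] Cons.prems(2) xI I SVe by auto
  obtain w' where w': "w' \<in> G" "rho G ((h \<circ> x) \<circ> foldr (\<circ>) xs id) = rho G (h \<circ> x) \<circ> w'"
    "word_length A w' \<le> K * length xs"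
    using Cons.IH[OF xsI hx] by blast
  obtain \<beta> where \<beta>: "\<beta> \<in> G" "rho G (h \<circ> x) = rho G h \<circ> \<beta>" "word_length A \<beta> \<le> K"
    using K xI Cons.prems(2) by blast
  have "rho G (h \<circ> foldr (\<circ>) (x # xs) id) = rho G ((h \<circ> x) \<circ> foldr (\<circ>) xs id)"
    by (simp add: o_assoc)
  also have "\<dots> = rho G h \<circ> (\<beta> \<circ> w')" using w'(2) \<beta>(2) by (simp add: o_assoc)
  finally have e: "rho G (h \<circ> foldr (\<circ>) (x # xs) id) = rho G h \<circ> (\<beta> \<circ> w')" .
  have "word_length A (\<beta> \<circ> w') \<le> word_length A \<beta> + word_length A w'"
    using wl_sub[of \<beta> A w'] \<beta>(1) w'(1) Ge by simp
  also have "\<dots> \<le> K * length (x # xs)" using \<beta>(3) w'(3) by simp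
  finally show ?case using e pg_comp[OF pg \<beta>(1) w'(1)] by blast
qed

lemma tau_chain:
  assumes pg: "perm_group G" and genA: "generates A G" and gen: "generates B (SV G)"
    and K: "\<forall>a\<in>A \<union> inv ` A. word_length B (tau a) \<le> K"
  shows "set xs \<subseteq> A \<union> inv ` A \<Longrightarrow>
     word_length B (tau (foldr (\<circ>) xs id)) \<le> K * length xs \<and> foldr (\<circ>) xs id \<in> G"
proof (induction xs)
  case Nil
  have f0: "foldr (\<circ>) [] id = id" by (simp only: foldr_Nil id_apply)
  show ?case unfolding f0 tau_id wl_id list.size(3) mult_0_right by (intro conjI order_refl pg_id[OF pg])
next
  case (Cons x xs)
  have SVe: "SV G = word_prods B" using gen unfolding generates_def by blast
  have AG: "A \<subseteq> G" using genA unfolding generates_def by blast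
  have xG: "x \<in> G" using Cons.prems AG pg_inv[OF pg] by auto
  have xsA: "set xs \<subseteq> A \<union> inv ` A" using Cons.prems by simp
  have IH: "word_length B (tau (foldr (\<circ>) xs id)) \<le> K * length xs" "foldr (\<circ>) xs id \<in> G"
    using Cons.IH[OF xsA] by blast+
  have "tau (foldr (\<circ>) (x # xs) id) = tau x \<circ> tau (foldr (\<circ>) xs id)"
    using tau_comp[OF pg_bij[OF pg xG] pg_bij[OF pg IH(2)]] by simp
  moreover have "word_length B (tau x \<circ> tau (foldr (\<circ>) xs id)) \<le> word_length B (tau x) + word_length B (tau (foldr (\<circ>) xs id))"
    using wl_sub[of "tau x" B] tau_SV[OF pg xG] tau_SV[OF pg IH(2)] SVe by simp
  moreover have "word_length B (tau x) \<le> K" using K Cons.prems by simp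
  ultimately have "word_length B (tau (foldr (\<circ>) (x # xs) id)) \<le> K * length (x # xs)"
    using IH(1) by simp
  moreover have "foldr (\<circ>) (x # xs) id \<in> G" using pg_comp[OF pg xG IH(2)] by simp
  ultimately show ?case by blast
qed



theorem theoremB:
  fixes G :: "('a \<Rightarrow> 'a) set" and A :: "('a \<Rightarrow> 'a) set"
    and B :: "('a cube \<Rightarrow> 'a cube) set"
  assumes "perm_group G"
    and "finite A" and "generates A G"
    and "finite B" and "generates B (SV G)"
  shows "(\<exists>\<rho>. \<rho> ` SV G \<subseteq> G \<and> coarse_lipschitz (SV G) (word_dist B) (word_dist A) \<rho> \<and>
              (\<forall>\<gamma>\<in>G. \<rho> (tau \<gamma>) = \<gamma>))
         \<and> quasi_retract G (word_dist A) (SV G) (word_dist B)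
         \<and> tau ` G \<subseteq> SV G \<and> qi_embedding G (word_dist A) (word_dist B) tau"
proof -
  note pg = assms(1) and genA = assms(3) and gen = assms(5)
  have SVe: "SV G = word_prods B" using gen unfolding generates_def by blast
  have Ge: "G = word_prods A" using genA unfolding generates_def by blast
  have AG: "A \<subseteq> G" using genA unfolding generates_def by blast
  have BSV: "B \<subseteq> SV G" using gen unfolding generates_def by blast
  have Bbij: "\<forall>b\<in>B. bij b" using BSV SV_bij by blast
  define I where "I = B \<union> inv ` B"
  have IS: "I \<subseteq> SV G"
  proof
    fix c assume "c \<in> I"
    then consider "c \<in> B" | b where "b \<in> B" "c = inv b" unfolding I_def by blast
    then show "c \<in> SV G"
    proof cases
      case 1 then show ?thesis using BSV by blast
    next
      case 2
      then have "b \<in> word_prods B" using BSV SVe by blast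
      then show ?thesis using gen_inv[OF Bbij] 2 SVe by simp
    qed
  qed
  have finI: "finite I" unfolding I_def using assms(4) by simp
  have "\<exists>K. \<forall>c\<in>I. (\<lambda>c K. \<forall>h\<in>SV G. \<exists>\<beta>\<in>G. rho G (h \<circ> c) = rho G h \<circ> \<beta> \<and> word_length A \<beta> \<le> K) c K"
  proof (rule finite_bound[OF finI])
    show "\<forall>c\<in>I. \<exists>K. \<forall>h\<in>SV G. \<exists>\<beta>\<in>G. rho G (h \<circ> c) = rho G h \<circ> \<beta> \<and> word_length A \<beta> \<le> K"
    proof
      fix c assume "c \<in> I"
      then have cS: "c \<in> SV G" using IS by blast
      obtain F where F: "finite F" "F \<subseteq> G" "\<forall>h\<in>SV G. \<exists>\<beta>\<in>F. rho G (h \<circ> c) = rho G h \<circ> \<beta>"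
        using rho_step[OF pg gen cS] by blast
      define Kc where "Kc = Max (insert 0 (word_length A ` F))"
      have "\<forall>\<beta>\<in>F. word_length A \<beta> \<le> Kc" unfolding Kc_def using F(1) by (simp add: Max_ge)
      then show "\<exists>K. \<forall>h\<in>SV G. \<exists>\<beta>\<in>G. rho G (h \<circ> c) = rho G h \<circ> \<beta> \<and> word_length A \<beta> \<le> K"
        using F by (intro exI[of _ Kc]) blast
    qed
  next
    fix c K K' assume "\<forall>h\<in>SV G. \<exists>\<beta>\<in>G. rho G (h \<circ> c) = rho G h \<circ> \<beta> \<and> word_length A \<beta> \<le> K" "K \<le> K'"
    then show "\<forall>h\<in>SV G. \<exists>\<beta>\<in>G. rho G (h \<circ> c) = rho G h \<circ> \<beta> \<and> word_length A \<beta> \<le> K'"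
      using order_trans by blast
  qed
  then obtain K where K: "\<forall>c\<in>I. \<forall>h\<in>SV G. \<exists>\<beta>\<in>G. rho G (h \<circ> c) = rho G h \<circ> \<beta> \<and> word_length A \<beta> \<le> K"
    by blast
  have rhoG: "rho G h \<in> G" if "h \<in> SV G" for h using rho_prop[OF that] by blast
  have rhoL: "word_dist A (rho G h) (rho G h') \<le> real K * word_dist B h h'"
    if h: "h \<in> SV G" and h': "h' \<in> SV G" for h h'
  proof -
    define g where "g = inv h \<circ> h'"
    have "inv h \<in> word_prods B" using gen_inv[OF Bbij] h SVe by simp
    then have gw: "g \<in> word_prods B" unfolding g_def using gen_comp h' SVe by simp
    obtain xs where xs: "length xs = word_length B g" "set xs \<subseteq> B \<union> inv ` B" "foldr (\<circ>) xs id = g"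
      using wl_word[OF gw] by blast
    have "set xs \<subseteq> I" using xs(2) unfolding I_def .
    from rho_chain[OF pg genA gen K IS this h] obtain w where
      w: "w \<in> G" "rho G (h \<circ> foldr (\<circ>) xs id) = rho G h \<circ> w" "word_length A w \<le> K * length xs"
      by blast
    have bh: "bij h" using SV_bij[OF h] .
    have hid: "h \<circ> inv h = id" using bh by (meson bij_is_surj surj_iff)
    have "h \<circ> g = h'" by (simp only: g_def o_assoc hid id_comp)
    then have e: "rho G h' = rho G h \<circ> w" using w(2) xs(3) by simp
    have br: "bij (rho G h)" using pg_bij[OF pg rhoG[OF h]] .
    have "inv (rho G h) \<circ> rho G h' = w"
      unfolding e using br by (simp add: o_assoc bij_is_inj inv_o_cancel)
    then have "word_dist A (rho G h) (rho G h') = real (word_length A w)"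
      unfolding word_dist_def by simp
    also have "\<dots> \<le> real (K * length xs)" using w(3) by (simp only: of_nat_le_iff)
    also have "\<dots> = real K * word_dist B h h'" unfolding word_dist_def xs(1) g_def by simp
    finally show ?thesis .
  qed
  define K2 where "K2 = Max (insert 0 ((\<lambda>a. word_length B (tau a)) ` (A \<union> inv ` A)))"
  have K2: "\<forall>a\<in>A \<union> inv ` A. word_length B (tau a) \<le> K2"
    unfolding K2_def using assms(2) by (simp add: Max_ge)
  have tauL: "word_dist B (tau g) (tau g') \<le> real K2 * word_dist A g g'"
    if g: "g \<in> G" and g': "g' \<in> G" for g g'
  proof -
    define w where "w = inv g \<circ> g'"
    have wG: "w \<in> G" unfolding w_def using pg_comp[OF pg pg_inv[OF pg g] g'] .
    obtain xs where xs: "length xs = word_length A w" "set xs \<subseteq> A \<union> inv ` A" "foldr (\<circ>) xs id = w"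
      using wl_word[of w A] wG Ge by blast
    have c: "word_length B (tau w) \<le> K2 * length xs"
      using tau_chain[OF pg genA gen K2 xs(2)] xs(3) by simp
    have bg: "bij g" "bij (inv g)" "bij g'" using pg_bij[OF pg] g g' pg_inv[OF pg g] by auto
    have "inv (tau g) \<circ> tau g' = tau w"
      unfolding w_def tau_inv[OF bg(1)] tau_comp[OF bg(2) bg(3)] ..
    then have "word_dist B (tau g) (tau g') = real (word_length B (tau w))"
      unfolding word_dist_def by simp
    also have "\<dots> \<le> real (K2 * length xs)" using c by (simp only: of_nat_le_iff)
    also have "\<dots> = real K2 * word_dist A g g'" unfolding word_dist_def xs(1) w_def by simp
    finally show ?thesis .
  qed
  have rt: "\<forall>\<gamma>\<in>G. rho G (tau \<gamma>) = \<gamma>" using rho_tau[OF pg] by blast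
  have tauSV: "tau ` G \<subseteq> SV G" using tau_SV[OF pg] by blast
  have nn: "\<And>C x y. word_dist C x y \<ge> 0" unfolding word_dist_def by simp
  have CLr0: "\<forall>x\<in>SV G. \<forall>x'\<in>SV G. word_dist A (rho G x) (rho G x') \<le> (real K + 1) * word_dist B x x' + 1"
  proof (intro ballI)
    fix x x' assume "x \<in> SV G" "x' \<in> SV G"
    then have "word_dist A (rho G x) (rho G x') \<le> real K * word_dist B x x'" using rhoL by blast
    also have "\<dots> \<le> (real K + 1) * word_dist B x x' + 1" using nn[of B x x'] by (simp add: distrib_right)
    finally show "word_dist A (rho G x) (rho G x') \<le> (real K + 1) * word_dist B x x' + 1" .
  qed
  have CLr: "coarse_lipschitz (SV G) (word_dist B) (word_dist A) (rho G)"
    unfolding coarse_lipschitz_def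
    by (rule exI[of _ "real K + 1"], rule exI[of _ "1::real"]) (use CLr0 in simp)
  have CLt0: "\<forall>x\<in>G. \<forall>x'\<in>G. word_dist B (tau x) (tau x') \<le> (real K2 + 1) * word_dist A x x' + 1"
  proof (intro ballI)
    fix x x' assume "x \<in> G" "x' \<in> G"
    then have "word_dist B (tau x) (tau x') \<le> real K2 * word_dist A x x'" using tauL by blast
    also have "\<dots> \<le> (real K2 + 1) * word_dist A x x' + 1" using nn[of A x x'] by (simp add: distrib_right)
    finally show "word_dist B (tau x) (tau x') \<le> (real K2 + 1) * word_dist A x x' + 1" .
  qed
  have CLt: "coarse_lipschitz G (word_dist A) (word_dist B) tau"
    unfolding coarse_lipschitz_def
    by (rule exI[of _ "real K2 + 1"], rule exI[of _ "1::real"]) (use CLt0 in simp)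
  have QR: "quasi_retract G (word_dist A) (SV G) (word_dist B)"
    unfolding quasi_retract_def
  proof (intro exI[of _ "rho G"] exI[of _ tau] exI[of _ 1] conjI ballI)
    show "rho G ` SV G \<subseteq> G" using rhoG by blast
    fix y assume y: "y \<in> G"
    have "inv y \<circ> y = id" using pg_bij[OF pg y] by (simp add: bij_is_inj inv_o_cancel)
    then show "word_dist A (rho G (tau y)) y \<le> 1" using rt y unfolding word_dist_def by (simp add: wl_id)
  qed (use tauSV CLr CLt in auto)
  have QI0: "\<forall>x\<in>G. \<forall>x'\<in>G. word_dist B (tau x) (tau x') \<le> (real K + real K2 + 1) * word_dist A x x' + 1 \<and>
      word_dist B (tau x) (tau x') \<ge> word_dist A x x' / (real K + real K2 + 1) - 1"
  proof (intro ballI conjI)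
    fix x x' assume x: "x \<in> G" and x': "x' \<in> G"
    have t1: "word_dist B (tau x) (tau x') \<le> real K2 * word_dist A x x'" using tauL x x' by blast
    also have "\<dots> \<le> (real K + real K2 + 1) * word_dist A x x' + 1"
      using nn[of A x x'] by (simp add: distrib_right mult_right_mono)
    finally show "word_dist B (tau x) (tau x') \<le> (real K + real K2 + 1) * word_dist A x x' + 1" .
    have "word_dist A x x' = word_dist A (rho G (tau x)) (rho G (tau x'))" using rt x x' by simp
    also have "\<dots> \<le> real K * word_dist B (tau x) (tau x')" using rhoL tauSV x x' by blast
    also have "\<dots> \<le> (real K + real K2 + 1) * word_dist B (tau x) (tau x')"
      using nn[of B "tau x" "tau x'"] by (simp add: distrib_right mult_right_mono)
    finally have "word_dist A x x' / (real K + real K2 + 1) \<le> word_dist B (tau x) (tau x')"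
      by (simp add: pos_divide_le_eq mult.commute)
    then show "word_dist B (tau x) (tau x') \<ge> word_dist A x x' / (real K + real K2 + 1) - 1" by simp
  qed
  have QI: "qi_embedding G (word_dist A) (word_dist B) tau"
    unfolding qi_embedding_def
    by (rule exI[of _ "real K + real K2 + 1"], rule exI[of _ "1::real"]) (use QI0 in simp)
  show ?thesis using CLr rhoG rt QR tauSV QI by blast
qed

end
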